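(* For relatively prime integers $r, s$ put $u = r^2 + s^2$, $v = 2r^2 - s^2$, $A = uv(u^2-v^2)$, and $\mathcal{S} = \{\pm u(u+v),\ \pm u(u-v),\ \pm v(u+v),\ \pm v(u-v)\}$. Then for all but finitely many pairs $(r,s)$ of relatively prime integers with $r\neq 0$, no element of $\mathcal{S}$ represents the same class in $\mathbb{Q}^\times/(\mathbb{Q}^\times)^2$ as any of $1, -1, A, -A$.
   Context: $\mathbb{Q}^\times/(\mathbb{Q}^\times)^2$ denotes the group of nonzero rationals modulo nonzero squares; two nonzero rationals represent the same class iff their quotient is a square of a rational. *)

theory Defs
  imports Complex_Main "HOL-Computational_Algebra.Primes"
begin

definition same_sq_class :: "rat \<Rightarrow> rat \<Rightarrow> bool" where
  "same_sq_class x y \<longleftrightarrow> x \<noteq> 0 \<and> y \<noteq> 0 \<and> (\<exists>q::rat. x / y = q ^ 2)"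

definition u_of :: "int \<Rightarrow> int \<Rightarrow> int" where
  "u_of r s = r^2 + s^2"

definition v_of :: "int \<Rightarrow> int \<Rightarrow> int" where
  "v_of r s = 2 * r^2 - s^2"

definition A_of :: "int \<Rightarrow> int \<Rightarrow> int" where
  "A_of r s = u_of r s * v_of r s * ((u_of r s)^2 - (v_of r s)^2)"

definition S_of :: "int \<Rightarrow> int \<Rightarrow> int set" where
  "S_of r s = (let u = u_of r s; v = v_of r s in
     {u*(u+v), -(u*(u+v)), u*(u-v), -(u*(u-v)),
      v*(u+v), -(v*(u+v)), v*(u-v), -(v*(u-v))})"

end

theory Submission
  imports Defs "HOL-Number_Theory.Cong" "HOL-Computational_Algebra.Nth_Powers"
begin

lemma coprime_by_primes:
  fixes a b :: int
  assumes "\<And>p. prime p \<Longrightarrow> p dvd a \<Longrightarrow> p dvd b \<Longrightarrow> False"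
  shows "coprime a b"
proof (rule ccontr)
  assume "\<not> coprime a b"
  then have "\<bar>gcd a b\<bar> \<noteq> 1" by (simp add: coprime_iff_gcd_eq_1)
  then obtain p where "prime p" "p dvd gcd a b" by (rule prime_factor_int)
  then show False using assms by auto
qed

lemma rat_sq:
  fixes n :: int and q :: rat
  assumes "of_int n = q^2"
  shows "\<exists>k. n = k^2"
proof -
  obtain a b where qb: "quotient_of q = (a, b)" by (cases "quotient_of q") auto
  have q: "q = of_int a / of_int b" using quotient_of_div[OF qb] .
  have b0: "b > 0" using quotient_of_denom_pos[OF qb] .
  have cp: "coprime a b" using quotient_of_coprime[OF qb] .
  have "of_int n * (of_int b)^2 = (of_int a :: rat)^2"
    using assms b0 unfolding q by (simp add: power_divide)
  then have e: "n * b^2 = a^2" by (metis of_int_eq_iff of_int_mult of_int_power)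
  then have "b^2 dvd a^2" by (metis dvd_triv_right)
  moreover have "coprime (b^2) (a^2)" using cp by (simp add: coprime_commute)
  ultimately have "is_unit (b^2)" by (metis coprime_absorb_left coprime_commute dvd_refl coprime_dvd_mult_left_iff mult_1_right)
  then have "b^2 = 1" using b0 by simp
  then show ?thesis using e by auto
qed

lemma sq_cancel:
  fixes c n k :: int
  assumes "c \<noteq> 0" "c^2 * n = k^2"
  shows "\<exists>j. n = j^2"
proof -
  have "c^2 dvd k^2" using assms(2) by (metis dvd_triv_left)
  then have "c dvd k" by simp
  then obtain j where "k = c * j" by blast
  then have "c^2 * n = c^2 * j^2" using assms(2) by (simp add: power_mult_distrib)
  then show ?thesis using assms(1) by auto
qed

lemma four_factor:
  fixes A B C D :: int
  assumes "A * B = C * D"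
  shows "\<exists>x y z w. A = x*y \<and> B = z*w \<and> C = x*z \<and> D = y*w"
proof (cases "A = 0 \<and> C = 0")
  case True
  then show ?thesis by (intro exI[of _ 0] exI[of _ D] exI[of _ B] exI[of _ 1]) auto
next
  case False
  define x where "x = gcd A C"
  have x0: "x \<noteq> 0" using False unfolding x_def by auto
  obtain y z where y: "A = x * y" and z: "C = x * z" and cyz: "coprime y z"
    using gcd_coprime_exists[of A C] x0 unfolding x_def by (auto simp: mult.commute)
  have "y * B = z * D" using assms y z x0 by (simp add: mult.assoc)
  then have "z dvd y * B" by (metis dvd_triv_left)
  then have "z dvd B" using cyz by (simp add: coprime_commute coprime_dvd_mult_right_iff)
  then obtain w where w: "B = z * w" by blast
  show ?thesis
  proof (cases "z = 0")
    case False
    then have "D = y * w" using \<open>y * B = z * D\<close> w by (simp add: mult.left_commute)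
    then show ?thesis using y z w by blast
  next
    case True
    then have "is_unit y" using cyz by simp
    then have "y = 1 \<or> y = -1" by auto
    then have "y * y = 1" by auto
    then have "D = y * (y * D)" by (metis mult.assoc mult_1)
    then show ?thesis using y z w True by (intro exI[of _ x] exI[of _ y] exI[of _ z] exI[of _ "y*D"]) auto
  qed
qed

lemma sqsq:
  fixes u v w :: int
  assumes "coprime u v" "u \<ge> 0" "v \<ge> 0" "u * v = w^2"
  shows "\<exists>a b. u = a^2 \<and> v = b^2"
proof (cases "u = 0 \<or> v = 0")
  case True
  from True show ?thesis
  proof
    assume "u = 0"
    then have "v = 1" using assms(1,3) by auto
    then show ?thesis using \<open>u = 0\<close> by (intro exI[of _ 0] exI[of _ 1]) auto
  next
    assume "v = 0"
    then have "u = 1" using assms(1,2) by auto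
    then show ?thesis using \<open>v = 0\<close> by (intro exI[of _ 1] exI[of _ 0]) auto
  qed
next
  case False
  define a where "a = nat u"
  define b where "b = nat v"
  have cp: "coprime a b" using assms(1,2,3) unfolding a_def b_def
    by (simp add: coprime_int_iff[symmetric])
  have "int (a * b) = int ((nat \<bar>w\<bar>)^2)" unfolding a_def b_def using assms
    by simp
  then have "a * b = (nat \<bar>w\<bar>)^2" by (simp only: of_nat_eq_iff)
  then have "is_nth_power 2 (a*b)" by auto
  with cp False assms have "is_nth_power 2 a" "is_nth_power 2 b"
    using is_nth_power_mult_coprime_natD[of a b 2] unfolding a_def b_def by auto
  then obtain c d where "a = c^2" "b = d^2" unfolding is_nth_power_def by blast
  then have "int (nat u) = int (c^2)" "int (nat v) = int (d^2)" unfolding a_def b_def by simp_all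
  then have "u = (int c)^2" "v = (int d)^2" using assms by simp_all
  then show ?thesis by blast
qed

lemma sq8: "(x::int)^2 mod 8 = 0 \<or> x^2 mod 8 = 1 \<or> x^2 mod 8 = 4"
  and sq8_odd: "odd x \<Longrightarrow> x^2 mod 8 = 1"
  and sq8_even: "even x \<Longrightarrow> x^2 mod 8 = 0 \<or> x^2 mod 8 = 4"
proof -
  have e: "x^2 mod 8 = (x mod 8)^2 mod 8" by (simp add: power_mod)
  have m: "x mod 8 \<in> {0,1,2,3,4,5,6,7}" by auto
  have o: "odd x \<longleftrightarrow> odd (x mod 8)" by (simp add: odd_iff_mod_2_eq_one mod_mod_cancel)
  have o2: "even x \<longleftrightarrow> even (x mod 8)" using o by simp
  show "x^2 mod 8 = 0 \<or> x^2 mod 8 = 1 \<or> x^2 mod 8 = 4" using m unfolding e by auto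
  show "odd x \<Longrightarrow> x^2 mod 8 = 1" using m unfolding e o by auto
  show "even x \<Longrightarrow> x^2 mod 8 = 0 \<or> x^2 mod 8 = 4" using m unfolding e o2 by auto
qed

lemma sq3: "(x::int)^2 mod 3 = (if 3 dvd x then 0 else 1)"
proof -
  have e: "x^2 mod 3 = (x mod 3)^2 mod 3" by (simp add: power_mod)
  have m: "x mod 3 \<in> {0,1,2}" by auto
  have d: "3 dvd x \<longleftrightarrow> x mod 3 = 0" by auto
  show ?thesis using m unfolding e d by auto
qed

lemma sumsq3:
  fixes a b :: int
  assumes "3 dvd a^2 + b^2" shows "3 dvd a" "3 dvd b"
proof -
  have "(a^2 + b^2) mod 3 = 0" using assms by auto
  then have "(a^2 mod 3 + b^2 mod 3) mod 3 = 0" by (simp add: mod_add_eq)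
  then show "3 dvd a" "3 dvd b" unfolding sq3 by (auto split: if_splits)
qed

lemma pythag:
  fixes a b c :: int
  assumes cab: "coprime a b" and eb: "even b" and eq: "a^2 + b^2 = c^2"
  shows "\<exists>P Q. coprime P Q \<and> b^2 = 4*P^2*Q^2 \<and> a^2 = (P^2-Q^2)^2 \<and> c^2 = (P^2+Q^2)^2"
proof -
  have oa: "odd a"
  proof
    assume "even a"
    then show False using coprime_common_divisor_int[OF cab, of 2] eb by simp
  qed
  have "odd (c^2)" using oa eb eq[symmetric] by simp
  then have oc: "odd c" by simp
  define al where "al = \<bar>a\<bar>"
  define C where "C = \<bar>c\<bar>"
  have eq2: "al^2 + b^2 = C^2" unfolding al_def C_def using eq by simp
  have al0: "al \<ge> 0" "C \<ge> 0" unfolding al_def C_def by auto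
  have "al^2 \<le> C^2" using eq2 by (smt (verit) zero_le_power2)
  then have aC: "al \<le> C" using al0 by (simp add: power_mono_iff)
  have oal: "odd al" "odd C" using oa oc unfolding al_def C_def by auto
  have "even (C - al)" "even (C + al)" using oal by auto
  then obtain k1 k2 where k1: "C - al = 2*k1" and k2: "C + al = 2*k2" by (meson evenE)
  obtain h where h: "b = 2*h" using eb by (meson evenE)
  have "(C - al)*(C + al) = C^2 - al^2" by (simp add: power2_eq_square algebra_simps)
  also have "... = b^2" using eq2 by simp
  finally have "(2*k1)*(2*k2) = (2*h)^2" using k1 k2 h by simp
  then have kk: "k1*k2 = h^2" by (simp add: power2_eq_square)
  have cac: "coprime a c"
  proof (rule coprime_by_primes)
    fix p :: int assume p: "prime p" "p dvd a" "p dvd c"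
    then have "p dvd c^2" "p dvd a^2" by (simp_all add: power2_eq_square)
    then have "p dvd c^2 - a^2" by (rule dvd_diff)
    then have "p dvd b^2" using eq by (metis add_diff_cancel_left')
    then have "p dvd b" using p(1) prime_dvd_power by blast
    then show False using p cab by (meson coprime_common_divisor not_prime_unit)
  qed
  have ck: "coprime k1 k2"
  proof (rule coprime_by_primes)
    fix p :: int assume p: "prime p" "p dvd k1" "p dvd k2"
    have "al = k2 - k1" "C = k1 + k2" using k1 k2 by linarith+
    then have "p dvd al" "p dvd C" using p by simp_all
    then have "p dvd a" "p dvd c" unfolding al_def C_def by simp_all
    then show False using p cac by (meson coprime_common_divisor not_prime_unit)
  qed
  have "k1 \<ge> 0" "k2 \<ge> 0" using k1 k2 aC al0 by auto
  then obtain Q P where Q: "k1 = Q^2" and P: "k2 = P^2" using sqsq[OF ck _ _ kk] by blast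
  have cPQ: "coprime P Q"
  proof (rule coprime_by_primes)
    fix p :: int assume p: "prime p" "p dvd P" "p dvd Q"
    then have "p dvd k1" "p dvd k2" unfolding P Q by (simp_all add: power2_eq_square)
    then show False using p ck by (meson coprime_common_divisor not_prime_unit)
  qed
  have "al = P^2 - Q^2" "C = P^2 + Q^2" using k1 k2 P Q by auto
  moreover have "b^2 = 4*P^2*Q^2" using kk h P Q by (simp add: power_mult_distrib mult.commute)
  moreover have "a^2 = al^2" "c^2 = C^2" unfolding al_def C_def by simp_all
  ultimately show ?thesis using cPQ by (intro exI[of _ P] exI[of _ Q]) simp
qed

lemma cm8: "[(M::int) = M mod 8] (mod 8)" by (simp add: cong_def)

lemma sq8set: "(x::int)^2 mod 8 \<in> {0,1,4}" using sq8[of x] by auto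

lemma mod8_b:
  fixes y M N :: int assumes "odd y" shows "y^2 \<noteq> 3*M^4 - N^4 + 2*M^2*N^2"
proof
  assume h: "y^2 = 3*M^4 - N^4 + 2*M^2*N^2"
  define X Y where "X = M^2" and "Y = N^2"
  have h': "y^2 = 3*X^2 - Y^2 + 2*X*Y" using h unfolding X_def Y_def by (simp add: power_mult[symmetric])
  have "[3*X^2 - Y^2 + 2*X*Y = 3*(X mod 8)^2 - (Y mod 8)^2 + 2*(X mod 8)*(Y mod 8)] (mod 8)"
    by (intro cong_add cong_diff cong_mult cong_pow cong_refl cm8)
  then have "(3*(X mod 8)^2 - (Y mod 8)^2 + 2*(X mod 8)*(Y mod 8)) mod 8 = 1"
    using h' sq8_odd[OF assms] by (simp add: cong_def)
  moreover have "X mod 8 \<in> {0,1,4}" "Y mod 8 \<in> {0,1,4}" unfolding X_def Y_def by (rule sq8set)+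
  ultimately show False by auto
qed

lemma mod8_a:
  fixes y M N :: int assumes "odd y" "y^2 = N^4 - 3*M^4 + 2*M^2*N^2" shows "even M" "odd N"
proof -
  define X Y where "X = M^2" and "Y = N^2"
  have h': "y^2 = Y^2 - 3*X^2 + 2*X*Y" using assms(2) unfolding X_def Y_def by (simp add: power_mult[symmetric])
  have "[Y^2 - 3*X^2 + 2*X*Y = (Y mod 8)^2 - 3*(X mod 8)^2 + 2*(X mod 8)*(Y mod 8)] (mod 8)"
    by (intro cong_add cong_diff cong_mult cong_pow cong_refl cm8)
  then have "((Y mod 8)^2 - 3*(X mod 8)^2 + 2*(X mod 8)*(Y mod 8)) mod 8 = 1"
    using h' sq8_odd[OF assms(1)] by (simp add: cong_def)
  moreover have "X mod 8 \<in> {0,1,4}" "Y mod 8 \<in> {0,1,4}" unfolding X_def Y_def by (rule sq8set)+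
  ultimately have "X mod 8 \<in> {0,4}" "Y mod 8 = 1" by auto
  moreover have "X mod 2 = X mod 8 mod 2" "Y mod 2 = Y mod 8 mod 2" by (simp_all add: mod_mod_cancel)
  ultimately have "X mod 2 = 0" "Y mod 2 = 1" by auto
  then have "even X" "odd Y" by (simp_all add: even_iff_mod_2_eq_zero odd_iff_mod_2_eq_one)
  then show "even M" "odd N" unfolding X_def Y_def by simp_all
qed

lemma coprime_sq_eq:
  fixes R S :: int assumes "coprime R S" "R^2 = S^2" shows "R^2 = 1"
proof -
  have "R = S \<or> R = -S" using assms(2) by (simp add: power2_eq_iff)
  then have "coprime R R" using assms(1) by auto
  then have "is_unit R" by simp
  then have "R = 1 \<or> R = -1" by auto
  then show ?thesis by auto
qed

lemma fourth:
  fixes G H t :: int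
  assumes "coprime G H" "G \<ge> 0" "H \<ge> 0" "G * H = t^4"
  shows "\<exists>M N. G = M^4 \<and> H = N^4 \<and> t^2 = M^2 * N^2 \<and> coprime M N"
proof -
  have "G * H = (t^2)^2" using assms(4) by (simp add: power_mult[symmetric])
  then obtain A B where A: "G = A^2" and B: "H = B^2" using sqsq[OF assms(1-3)] by blast
  have cAB: "coprime \<bar>A\<bar> \<bar>B\<bar>" using assms(1) unfolding A B by simp
  have "(\<bar>A\<bar> * \<bar>B\<bar>)^2 = (t^2)^2" using assms(4) unfolding A B
    by (simp add: power_mult_distrib power_mult[symmetric])
  then have ab: "\<bar>A\<bar> * \<bar>B\<bar> = t^2"
    by (metis power2_eq_iff_nonneg abs_ge_zero mult_nonneg_nonneg zero_le_power2)
  obtain M N where M: "\<bar>A\<bar> = M^2" and N: "\<bar>B\<bar> = N^2" using sqsq[OF cAB _ _ ab] by auto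
  have "G = M^4" "H = N^4" unfolding A B
    by (metis M N power2_abs power_mult numeral_Bit0 mult_2 numeral_One semiring_norm(2) one_add_one)+
  moreover have "t^2 = M^2 * N^2" using ab M N by simp
  moreover have "coprime M N" using cAB unfolding M N by simp
  ultimately show ?thesis by blast
qed

lemma prime_not_unit_dvd:
  fixes p a b :: int
  assumes "prime p" "p dvd a" "p dvd b" "coprime a b" shows False
  using assms by (meson coprime_common_divisor not_prime_unit)

lemma euler_even:
  fixes x y z :: int
  assumes cp: "coprime x y" and ex: "even x" and x0: "x \<noteq> 0"
    and eq: "x^4 - x^2*y^2 + y^4 = z^2"
  shows "\<exists>R S z'. R^4 - R^2*S^2 + S^4 = z'^2 \<and> R*S \<noteq> 0 \<and> R^2 \<noteq> S^2 \<and> \<bar>z'\<bar> < \<bar>z\<bar>"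
proof -
  have oy: "odd y"
  proof
    assume "even y"
    then show False using coprime_common_divisor_int[OF cp, of 2] ex by simp
  qed
  obtain t where xt: "x = 2*t" using ex by blast
  have t0: "t \<noteq> 0" using x0 xt by simp
  define Z where "Z = \<bar>z\<bar>"
  have eqZ: "16*t^4 - 4*t^2*y^2 + y^4 = Z^2" unfolding Z_def using eq xt
    by (simp add: power_mult_distrib)
  have "odd (Z^2)" using eqZ[symmetric] oy by simp
  then have oZ: "odd Z" by simp
  have Zpos: "Z > 0" using oZ unfolding Z_def by (cases "z = 0") auto
  have "even (Z - y^2 + 2*t^2)" using oZ oy by simp
  then obtain g1 where g1: "Z - y^2 + 2*t^2 = 2*g1" by blast
  have "even (Z + y^2 - 2*t^2)" using oZ oy by simp
  then obtain g2 where g2: "Z + y^2 - 2*t^2 = 2*g2" by blast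
  have sum: "g1 + g2 = Z" using g1 g2 by linarith
  have dif: "g2 - g1 = y^2 - 2*t^2" using g1 g2 by linarith
  have "(2*g1)*(2*g2) = 12*t^4" unfolding g1[symmetric] g2[symmetric] using eqZ by algebra
  then have prod: "g1 * g2 = 3*t^4" by simp
  have "0 < g1 * g2" using prod t0 by simp
  then have "(0 < g1 \<and> 0 < g2) \<or> (g1 < 0 \<and> g2 < 0)" by (simp add: zero_less_mult_iff)
  then have g1p: "g1 > 0" and g2p: "g2 > 0" using sum Zpos by auto
  have cg: "coprime g1 g2"
  proof (rule coprime_by_primes)
    fix p :: int assume p: "prime p" "p dvd g1" "p dvd g2"
    have pd: "p dvd y^2 - 2*t^2" using p dif by (metis dvd_diff)
    have "p dvd 3*t^4" using p prod by (metis dvd_mult2)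
    then have "p dvd 3 \<or> p dvd t" using p(1) by (auto simp: prime_dvd_mult_iff dest: prime_dvd_power)
    then show False
    proof
      assume "p dvd t"
      then have "p dvd 2*t^2" by (simp add: power2_eq_square)
      then have "p dvd y^2" using pd by (metis diff_add_cancel dvd_add)
      then have "p dvd y" using p(1) prime_dvd_power by blast
      moreover have "p dvd x" using \<open>p dvd t\<close> xt by simp
      ultimately show False using p(1) cp prime_not_unit_dvd by blast
    next
      assume "p dvd 3"
      then have p3: "p = 3" using p(1) by (simp add: primes_dvd_imp_eq)
      have "3 dvd (y^2 - 2*t^2) + 3*t^2" using pd p3 by (intro dvd_add) simp_all
      moreover have "(y^2 - 2*t^2) + 3*t^2 = y^2 + t^2" by simp
      ultimately have "3 dvd y^2 + t^2" by metis
      then have "3 dvd y" "3 dvd t" using sumsq3 by blast+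
      then have "3 dvd x" "3 dvd y" using xt by simp_all
      then show False using cp prime_not_unit_dvd[of 3 x y] by simp
    qed
  qed
  have "3 dvd g1 * g2" using prod by simp
  then have "3 dvd g1 \<or> 3 dvd g2" by (simp add: prime_dvd_mult_iff)
  then show ?thesis
  proof
    assume "3 dvd g2"
    then obtain G where G: "g2 = 3*G" by blast
    have "g1 * G = t^4" using prod G by simp
    moreover have "coprime g1 G" using cg G by simp
    moreover have "G \<ge> 0" using g2p G by simp
    ultimately obtain N M where "g1 = N^4" "G = M^4" "t^2 = N^2*M^2" "coprime N M"
      using fourth[of g1 G t] g1p by auto
    then have "y^2 = 3*M^4 - N^4 + 2*M^2*N^2" using dif G by (simp add: algebra_simps)
    then show ?thesis using mod8_b[OF oy] by blast
  next
    assume "3 dvd g1"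
    then obtain G where G: "g1 = 3*G" by blast
    have "G * g2 = t^4" using prod G by simp
    moreover have "coprime G g2" using cg G by simp
    moreover have "G \<ge> 0" using g1p G by simp
    ultimately obtain M N where MN: "G = M^4" "g2 = N^4" "t^2 = M^2*N^2" and cMN: "coprime M N"
      using fourth[of G g2 t] g2p by auto
    have yeq: "y^2 = N^4 - 3*M^4 + 2*M^2*N^2" using dif G MN by (simp add: algebra_simps)
    have eM: "even M" and oN: "odd N" using mod8_a[OF oy yeq] by auto
    have M0: "M \<noteq> 0" using MN t0 by auto
    define F1 F2 where "F1 = N^2 - M^2" and "F2 = N^2 + 3*M^2"
    have FF: "F1 * F2 = y^2" unfolding F1_def F2_def yeq by algebra
    have oF1: "odd F1" unfolding F1_def using eM oN by simp
    have cF1M: "coprime F1 M"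
    proof (rule coprime_by_primes)
      fix p :: int assume p: "prime p" "p dvd F1" "p dvd M"
      then have "p dvd M^2" by (simp add: power2_eq_square)
      then have "p dvd N^2" using p(2) unfolding F1_def by (metis diff_add_cancel dvd_add)
      then have "p dvd N" using p(1) prime_dvd_power by blast
      then show False using p cMN prime_not_unit_dvd by blast
    qed
    have cF: "coprime F1 F2"
    proof (rule coprime_by_primes)
      fix p :: int assume p: "prime p" "p dvd F1" "p dvd F2"
      then have "p dvd F2 - F1" by (intro dvd_diff) simp_all
      then have "p dvd 2*(2*(M*M))" unfolding F1_def F2_def by (simp add: algebra_simps power2_eq_square)
      then have "p dvd 2 \<or> p dvd M" using p(1) by (metis prime_dvd_mult_iff)
      then show False
      proof
        assume "p dvd 2"
        then have "p = 2" using p(1) by (simp add: primes_dvd_imp_eq)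
        then show False using p(2) oF1 by simp
      next
        assume "p dvd M" then show False using p cF1M prime_not_unit_dvd by blast
      qed
    qed
    have "N \<noteq> 0" using oN by auto
    then have "N^2 > 0" by simp
    then have F2p: "F2 > 0" unfolding F2_def by (simp add: add_pos_nonneg)
    have "F1 \<ge> 0"
    proof (rule ccontr)
      assume "\<not> F1 \<ge> 0"
      then have "F1 * F2 < 0" using F2p by (simp add: mult_neg_pos)
      then show False using FF by (metis not_less zero_le_power2)
    qed
    then obtain c d where c: "F1 = c^2" and d: "F2 = d^2" using sqsq[OF cF _ _ FF] F2p by auto
    have ccM: "coprime c M" using cF1M c by simp
    have "c^2 + M^2 = N^2" using c unfolding F1_def by simp
    then obtain e f where cef: "coprime e f" and Mef: "M^2 = 4*e^2*f^2"
        and cef2: "c^2 = (e^2-f^2)^2" and Nef: "N^2 = (e^2+f^2)^2"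
      using pythag[OF ccM eM] by blast
    have oc: "odd c" using oF1 c by simp
    have oef: "odd (e^2 - f^2)"
    proof -
      have "odd ((e^2-f^2)^2)" using cef2 oc by (metis even_power pos2)
      then show ?thesis by simp
    qed
    have cef4: "coprime (e^2 - f^2) (4*e*f)"
    proof (rule coprime_by_primes)
      fix p :: int assume p: "prime p" "p dvd e^2 - f^2" "p dvd 4*e*f"
      have "p dvd 2*(2*e*f)" using p(3) by (simp add: mult.assoc)
      then have "p dvd 2 \<or> p dvd e \<or> p dvd f" using p(1) by (metis prime_dvd_mult_iff)
      then show False
      proof (elim disjE)
        assume "p dvd 2"
        then have "p = 2" using p(1) by (simp add: primes_dvd_imp_eq)
        then show False using p(2) oef by simp
      next
        assume pe: "p dvd e"
        then have "p dvd e^2" by (simp add: power2_eq_square)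
        then have "p dvd e^2 - (e^2 - f^2)" using p(2) by (rule dvd_diff)
        then have "p dvd f^2" by simp
        then have "p dvd f" using p(1) prime_dvd_power by blast
        then show False using pe p(1) cef prime_not_unit_dvd by blast
      next
        assume pf: "p dvd f"
        then have "p dvd f^2" by (simp add: power2_eq_square)
        then have "p dvd (e^2 - f^2) + f^2" using p(2) by (intro dvd_add)
        then have "p dvd e^2" by simp
        then have "p dvd e" using p(1) prime_dvd_power by blast
        then show False using pf p(1) cef prime_not_unit_dvd by blast
      qed
    qed
    have h4: "(e^2 - f^2)^2 + (4*e*f)^2 = d^2"
    proof -
      have "(e^2 - f^2)^2 + (4*e*f)^2 = c^2 + 4*M^2" using cef2 Mef by (simp add: power_mult_distrib)
      also have "... = F2" using c unfolding F1_def F2_def by simp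
      finally show ?thesis using d by simp
    qed
    have ev4: "even (4*e*f)" by simp
    from pythag[OF cef4 ev4 h4] obtain R S where cRS: "coprime R S" and RS1: "(4*e*f)^2 = 4*R^2*S^2"
        and RS2: "(e^2-f^2)^2 = (R^2-S^2)^2" by blast
    define z' where "z' = e^2 + f^2"
    have RS3: "R^2*S^2 = 4*e^2*f^2" using RS1 by (simp add: power_mult_distrib)
    have E: "R^4 - R^2*S^2 + S^4 = z'^2" unfolding z'_def using RS2 RS3 by algebra
    have RS0: "R*S \<noteq> 0" using RS3 Mef M0 by auto
    have RSne: "R^2 \<noteq> S^2"
    proof
      assume "R^2 = S^2"
      then have "R^2 = 1" "S^2 = 1" using coprime_sq_eq[OF cRS] by auto
      then have "1 = 4*e^2*f^2" using RS3 by simp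
      then have "(1::int) = 2 * (2*e^2*f^2)" by simp
      then have "even (1::int)" by (rule dvdI)
      then show False by simp
    qed
    have z'N: "z' = \<bar>N\<bar>"
    proof -
      have "z'^2 = N^2" unfolding z'_def using Nef by simp
      moreover have "z' \<ge> 0" unfolding z'_def by simp
      ultimately show ?thesis by (metis abs_of_nonneg power2_abs power2_eq_iff_nonneg abs_ge_zero)
    qed
    have "\<bar>N\<bar> \<ge> 1" using oN by (cases "N = 0") auto
    then have "\<bar>N\<bar>^1 \<le> \<bar>N\<bar>^4" by (intro power_increasing) auto
    then have "\<bar>N\<bar> \<le> N^4" by (simp add: power_abs[symmetric])
    moreover have "M^4 > 0" using M0 by simp
    ultimately have "\<bar>N\<bar> < Z" using sum G MN by linarith
    then have "\<bar>z'\<bar> < Z" using z'N by simp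
    then have "\<bar>z'\<bar> < \<bar>z\<bar>" unfolding Z_def .
    then show ?thesis using E RS0 RSne by blast
  qed
qed

lemma euler_pos:
  fixes x y :: int assumes "x*y \<noteq> 0" shows "x^4 - x^2*y^2 + y^4 > 0"
proof -
  have "x^4 - x^2*y^2 + y^4 = (x^2 - y^2)^2 + (x*y)^2" by algebra
  moreover have "(x*y)^2 > 0" using assms by simp
  ultimately show ?thesis by (smt (verit) zero_le_power2)
qed

lemma euler_step:
  fixes x y z :: int
  assumes eq: "x^4 - x^2*y^2 + y^4 = z^2" and nt: "x*y \<noteq> 0" "x^2 \<noteq> y^2"
  shows "\<exists>x' y' z'. x'^4 - x'^2*y'^2 + y'^4 = z'^2 \<and> x'*y' \<noteq> 0 \<and> x'^2 \<noteq> y'^2 \<and> \<bar>z'\<bar> < \<bar>z\<bar>"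
proof -
  have z0: "z \<noteq> 0" using euler_pos[OF nt(1)] eq by auto
  show ?thesis
  proof (cases "coprime x y")
    case False
    define g where "g = gcd x y"
    have g0: "g \<noteq> 0" using nt(1) unfolding g_def by auto
    obtain x' y' where xg: "x = x' * g" and yg: "y = y' * g"
      using gcd_coprime_exists[of x y] g0 unfolding g_def by auto
    have g1: "\<bar>g\<bar> \<noteq> 1" using False unfolding g_def by (simp add: coprime_iff_gcd_eq_1)
    have "g \<ge> 0" unfolding g_def by simp
    then have g2: "g \<ge> 2" using g0 g1 by auto
    have eq': "g^4 * (x'^4 - x'^2*y'^2 + y'^4) = z^2" using eq unfolding xg yg by algebra
    then have "(g^2)^2 dvd z^2" by (metis dvd_triv_left power_mult numeral_Bit0 mult_2 numeral_One semiring_norm(2) one_add_one)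
    then have "g^2 dvd z" using pow_divides_pow_iff[of 2 "g^2" z] by simp
    then obtain z' where zz: "z = g^2 * z'" by blast
    have "g^4 * (x'^4 - x'^2*y'^2 + y'^4) = g^4 * z'^2" using eq' unfolding zz by algebra
    then have E: "x'^4 - x'^2*y'^2 + y'^4 = z'^2" using g0 by simp
    have "x'*y' \<noteq> 0" using nt(1) xg yg by auto
    moreover have "x'^2 \<noteq> y'^2" using nt(2) xg yg by (auto simp: power_mult_distrib)
    moreover have "\<bar>z'\<bar> < \<bar>z\<bar>"
    proof -
      have "z' \<noteq> 0" using z0 zz by auto
      moreover have "g*g \<ge> 2*2" using g2 by (intro mult_mono) auto
      then have "g^2 \<ge> 4" by (simp add: power2_eq_square)
      ultimately have "1 * \<bar>z'\<bar> < g^2 * \<bar>z'\<bar>" by (intro mult_strict_right_mono) auto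
      then show ?thesis unfolding zz by (simp add: abs_mult)
    qed
    ultimately show ?thesis using E by blast
  next
    case cp: True
    consider "odd x" "odd y" | "even x" | "even y" by blast
    then show ?thesis
    proof cases
      case 1
      have cxy: "coprime (x*y) (x^2 - y^2)"
      proof (rule coprime_by_primes)
        fix p :: int assume p: "prime p" "p dvd x*y" "p dvd x^2 - y^2"
        have "p dvd x \<or> p dvd y" using p by (simp add: prime_dvd_mult_iff)
        then show False
        proof
          assume px: "p dvd x"
          then have "p dvd x^2" by (simp add: power2_eq_square)
          then have "p dvd x^2 - (x^2 - y^2)" using p(3) by (rule dvd_diff)
          then have "p dvd y^2" by simp
          then have "p dvd y" using p(1) prime_dvd_power by blast
          then show False using px p(1) cp prime_not_unit_dvd by blast
        next
          assume py: "p dvd y"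
          then have "p dvd y^2" by (simp add: power2_eq_square)
          then have "p dvd (x^2 - y^2) + y^2" using p(3) by (intro dvd_add)
          then have "p dvd x^2" by simp
          then have "p dvd x" using p(1) prime_dvd_power by blast
          then show False using py p(1) cp prime_not_unit_dvd by blast
        qed
      qed
      have ev: "even (x^2 - y^2)" using 1 by simp
      have h: "(x*y)^2 + (x^2 - y^2)^2 = z^2" using eq by algebra
      from pythag[OF cxy ev h] obtain P Q where
        pq: "(x^2-y^2)^2 = 4*P^2*Q^2" "(x*y)^2 = (P^2-Q^2)^2" "z^2 = (P^2+Q^2)^2" by blast
      have "even (x^2 + y^2)" using 1 by simp
      then obtain z' where z': "x^2 + y^2 = 2*z'" by blast
      have "4*(P^4 - P^2*Q^2 + Q^4) = 4*z'^2"
      proof -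
        have "4*(P^4 - P^2*Q^2 + Q^4) = 4*(P^2-Q^2)^2 + 4*P^2*Q^2" by algebra
        also have "... = 4*(x*y)^2 + (x^2-y^2)^2" using pq by simp
        also have "... = (x^2+y^2)^2" by algebra
        also have "... = 4*z'^2" unfolding z' by algebra
        finally show ?thesis .
      qed
      then have E: "P^4 - P^2*Q^2 + Q^4 = z'^2" by simp
      have "P*Q \<noteq> 0" using pq(1) nt(2) by auto
      moreover have "P^2 \<noteq> Q^2" using pq(2) nt(1) by auto
      moreover have "\<bar>z'\<bar> < \<bar>z\<bar>"
      proof -
        have "4*z'^2 = (x^2+y^2)^2" unfolding z' by algebra
        moreover have "4*z^2 = (x^2+y^2)^2 + 3*(x^2-y^2)^2" using eq by algebra
        moreover have "(x^2-y^2)^2 > 0" using nt(2) by simp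
        ultimately have "z'^2 < z^2" by linarith
        then have "\<bar>z'\<bar>^2 < \<bar>z\<bar>^2" by simp
        then show ?thesis using abs_ge_zero power_less_imp_less_base by blast
      qed
      ultimately show ?thesis using E by blast
    next
      case 2
      have "x \<noteq> 0" using nt(1) by auto
      from euler_even[OF cp 2 this eq] show ?thesis by blast
    next
      case 3
      have eq2: "y^4 - y^2*x^2 + x^4 = z^2" using eq by algebra
      have "coprime y x" using cp by (simp add: coprime_commute)
      moreover have "y \<noteq> 0" using nt(1) by auto
      ultimately have "\<exists>R S z'. R^4 - R^2*S^2 + S^4 = z'^2 \<and> R*S \<noteq> 0 \<and> R^2 \<noteq> S^2 \<and> \<bar>z'\<bar> < \<bar>z\<bar>"
        using euler_even[OF _ 3 _ eq2] by blast
      then show ?thesis by blast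
    qed
  qed
qed

theorem euler:
  fixes x y z :: int
  assumes "x^4 - x^2*y^2 + y^4 = z^2"
  shows "x*y = 0 \<or> x^2 = y^2"
proof -
  have "\<forall>x y z. nat \<bar>z\<bar> = n \<longrightarrow> x^4 - x^2*y^2 + y^4 = z^2 \<longrightarrow> x*y = 0 \<or> x^2 = y^2" for n
  proof (induction n rule: less_induct)
    case (less n)
    show ?case
    proof (intro allI impI)
      fix x y z :: int
      assume n: "nat \<bar>z\<bar> = n" and e: "x^4 - x^2*y^2 + y^4 = z^2"
      show "x*y = 0 \<or> x^2 = y^2"
      proof (rule ccontr)
        assume "\<not> (x*y = 0 \<or> x^2 = y^2)"
        then obtain x' y' z' where e': "x'^4 - x'^2*y'^2 + y'^4 = z'^2" and
          nt: "x'*y' \<noteq> 0" "x'^2 \<noteq> y'^2" and lt: "\<bar>z'\<bar> < \<bar>z\<bar>"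
          using euler_step[OF e] by blast
        have "nat \<bar>z'\<bar> < n" using lt n by linarith
        then show False using less.IH e' nt by blast
      qed
    qed
  qed
  then show ?thesis using assms by blast
qed

lemma caseII:
  fixes r s a b :: int
  assumes ha: "2*r^2 - s^2 = a^2" and hb: "2*s^2 - r^2 = b^2"
  shows "r^2 = s^2"
proof -
  define U V p q where "U = a + b" and "V = a - b" and "p = r + s" and "q = r - s"
  have h1: "U*V = 3*p*q" unfolding U_def V_def p_def q_def using ha hb by algebra
  have h2: "U^2 + V^2 = p^2 + q^2" unfolding U_def V_def p_def q_def using ha hb by algebra
  have pq: "p*q = r^2 - s^2" unfolding p_def q_def by algebra
  have "(U - p)*(U + p) = (q - V)*(q + V)" using h2 by algebra
  then obtain X Y Z W where e1: "U - p = X*Y" and e2: "U + p = Z*W" and e3: "q - V = X*Z"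
    and e4: "q + V = Y*W" using four_factor by blast
  have "2*(2*X*W*(Y^2 - Z^2) + Y*Z*(X^2 - W^2)) = 4*(U*V - 3*p*q)"
    using e1 e2 e3 e4 by algebra
  then have rel: "2*X*W*(Y^2 - Z^2) + Y*Z*(X^2 - W^2) = 0" using h1 by simp
  have Eq: "X^2 * (Y^4 - Y^2*Z^2 + Z^4) = (Y*Z*W - (Y^2 - Z^2)*X)^2" using rel by algebra
  have pq0: "p*q = 0 \<Longrightarrow> r^2 = s^2" using pq by simp
  show ?thesis
  proof (cases "X = 0")
    case True
    then have "U = p" "V = q" using e1 e3 by auto
    then have "p*q = 0" using h1 by auto
    then show ?thesis by (rule pq0)
  next
    case X0: False
    have "X^2 dvd (Y*Z*W - (Y^2 - Z^2)*X)^2" using Eq by (metis dvd_triv_left)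
    then have "X dvd (Y*Z*W - (Y^2 - Z^2)*X)" by simp
    then obtain k where k: "Y*Z*W - (Y^2 - Z^2)*X = X*k" by blast
    have "X^2 * (Y^4 - Y^2*Z^2 + Z^4) = X^2 * k^2" using Eq k by (simp add: power_mult_distrib)
    then have "Y^4 - Y^2*Z^2 + Z^4 = k^2" using X0 by simp
    then have "Y*Z = 0 \<or> Y^2 = Z^2" by (rule euler)
    then consider "Y = 0" | "Z = 0" | "Y \<noteq> 0" "Z \<noteq> 0" "Y^2 = Z^2" by auto
    then show ?thesis
    proof cases
      case 1
      then have "U = p" "V = -q" using e1 e4 by auto
      then have "p*q = 0" using h1 by auto
      then show ?thesis by (rule pq0)
    next
      case 2
      then have "U = -p" "V = q" using e2 e3 by auto
      then have "p*q = 0" using h1 by auto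
      then show ?thesis by (rule pq0)
    next
      case 3
      then have "Y*Z*(X^2 - W^2) = 0" using rel by simp
      then have "X^2 = W^2" using 3 by simp
      then have "(Z*W)^2 = (X*Y)^2" using 3 by (simp add: power_mult_distrib)
      then have "Z*W = X*Y \<or> Z*W = -(X*Y)" by (simp add: power2_eq_iff)
      then show ?thesis
      proof
        assume "Z*W = X*Y"
        then have "p = 0" using e1 e2 by linarith
        then show ?thesis by (intro pq0) simp
      next
        assume "Z*W = -(X*Y)"
        then have "U = 0" using e1 e2 by linarith
        then have "a = -b" unfolding U_def by simp
        then have "a^2 = b^2" by simp
        then show ?thesis using ha hb by linarith
      qed
    qed
  qed
qed

lemma even_of_mod8: "(X::int) mod 8 \<in> {0,4} \<Longrightarrow> even X"
proof -
  assume "X mod 8 \<in> {0,4}"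
  moreover have "X mod 2 = X mod 8 mod 2" by (simp add: mod_mod_cancel)
  ultimately have "X mod 2 = 0" by auto
  then show "even X" by (simp add: even_iff_mod_2_eq_zero)
qed

lemma caseI_par:
  fixes r s a b :: int
  assumes "r^2 + s^2 = a^2" "r^2 - 2*s^2 = b^2"
  shows "even s"
proof -
  define X Y where "X = r^2" and "Y = s^2"
  have c1: "[X + Y = X mod 8 + Y mod 8] (mod 8)" by (intro cong_add cm8)
  have c2: "[X - 2*Y = X mod 8 - 2*(Y mod 8)] (mod 8)" by (intro cong_diff cong_mult cong_refl cm8)
  have e1: "a^2 = X + Y" "b^2 = X - 2*Y" using assms unfolding X_def Y_def by simp_all
  have f1: "X mod 8 \<in> {0,1,4}" and f2: "Y mod 8 \<in> {0,1,4}"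
    unfolding X_def Y_def by (rule sq8set)+
  have f3: "(X mod 8 + Y mod 8) mod 8 \<in> {0,1,4}"
    using sq8set[of a] c1 unfolding cong_def e1 by (simp only:)
  have f4: "(X mod 8 - 2*(Y mod 8)) mod 8 \<in> {0,1,4}"
    using sq8set[of b] c2 unfolding cong_def e1 by (simp only:)
  have L: "\<And>x y::int. x \<in> {0,1,4} \<Longrightarrow> y \<in> {0,1,4} \<Longrightarrow> (x + y) mod 8 \<in> {0,1,4} \<Longrightarrow>
     (x - 2*y) mod 8 \<in> {0,1,4} \<Longrightarrow> y \<in> {0,4}" by auto
  have "Y mod 8 \<in> {0,4}" by (rule L[OF f1 f2 f3 f4])
  then have "even Y" by (rule even_of_mod8)
  then show ?thesis unfolding Y_def by simp
qed

lemma caseI_kill: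
  fixes c d M N :: int
  assumes "c^2 = 2*M^2 + N^2" "d^2 = M^2 - N^2"
  shows "even M \<and> even N"
proof -
  define X Y where "X = M^2" and "Y = N^2"
  have c1: "[2*X + Y = 2*(X mod 8) + Y mod 8] (mod 8)" by (intro cong_add cong_mult cong_refl cm8)
  have c2: "[X - Y = X mod 8 - Y mod 8] (mod 8)" by (intro cong_diff cm8)
  have e1: "c^2 = 2*X + Y" "d^2 = X - Y" using assms unfolding X_def Y_def by simp_all
  have f1: "X mod 8 \<in> {0,1,4}" and f2: "Y mod 8 \<in> {0,1,4}"
    unfolding X_def Y_def by (rule sq8set)+
  have f3: "(2*(X mod 8) + Y mod 8) mod 8 \<in> {0,1,4}"
    using sq8set[of c] c1 unfolding cong_def e1 by (simp only:)
  have f4: "(X mod 8 - Y mod 8) mod 8 \<in> {0,1,4}"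
    using sq8set[of d] c2 unfolding cong_def e1 by (simp only:)
  have L: "\<And>x y::int. x \<in> {0,1,4} \<Longrightarrow> y \<in> {0,1,4} \<Longrightarrow> (2*x + y) mod 8 \<in> {0,1,4} \<Longrightarrow>
     (x - y) mod 8 \<in> {0,1,4} \<Longrightarrow> x \<in> {0,4} \<and> y \<in> {0,4}" by auto
  have "X mod 8 \<in> {0,4} \<and> Y mod 8 \<in> {0,4}" by (rule L[OF f1 f2 f3 f4])
  then have g1: "X mod 8 \<in> {0,4}" and g2: "Y mod 8 \<in> {0,4}" by blast+
  have "even X" "even Y" using even_of_mod8[OF g1] even_of_mod8[OF g2] .
  then show ?thesis unfolding X_def Y_def by simp
qed

lemma three_dvd_sq: "3 dvd (x::int)^2 \<Longrightarrow> 3 dvd x"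
  using prime_dvd_power[of 3 x 2] by simp

lemma caseI_step:
  fixes r s a b :: int
  assumes cp: "coprime r s" and s0: "s \<noteq> 0" and ha: "r^2 + s^2 = a^2" and hb: "r^2 - 2*s^2 = b^2"
  shows "\<exists>r' s' a' b'. coprime r' s' \<and> s' \<noteq> 0 \<and> \<bar>s'\<bar> < \<bar>s\<bar> \<and> r'^2 + s'^2 = a'^2 \<and> r'^2 - 2*s'^2 = b'^2"
proof -
  have es: "even s" using caseI_par[OF ha hb] .
  have orr: "odd r"
  proof
    assume "even r"
    then show False using coprime_common_divisor_int[OF cp, of 2] es by simp
  qed
  obtain k where sk: "s = 2*k" using es by blast
  have k0: "k \<noteq> 0" using s0 sk by simp
  define a1 b1 where "a1 = \<bar>a\<bar>" and "b1 = \<bar>b\<bar>"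
  have ha1: "r^2 + s^2 = a1^2" and hb1: "r^2 - 2*s^2 = b1^2" unfolding a1_def b1_def using ha hb by simp_all
  have oa: "odd a1" using ha1 orr es by (metis even_add even_power zero_less_numeral)
  have "odd (b1^2)" using hb1[symmetric] orr by simp
  then have ob: "odd b1" by simp
  have a1p: "a1 \<ge> 0" "b1 \<ge> 0" unfolding a1_def b1_def by simp_all
  have d1: "a1^2 - b1^2 = 3*s^2" using ha1 hb1 by linarith
  have d2: "2*a1^2 + b1^2 = 3*r^2" using ha1 hb1 by linarith
  have "s^2 > 0" using s0 by simp
  then have "b1^2 < a1^2" using d1 by linarith
  then have ab: "b1 < a1" using a1p power_less_imp_less_base by blast
  have cab: "coprime a1 b1"
  proof (rule coprime_by_primes)
    fix p :: int assume p: "prime p" "p dvd a1" "p dvd b1"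
    have "p dvd a1^2 - b1^2" using p by (simp add: power2_eq_square)
    then have p1: "p dvd 3*s^2" using d1 by simp
    have "p dvd 2*a1^2 + b1^2" using p by (simp add: power2_eq_square)
    then have p2: "p dvd 3*r^2" using d2 by simp
    show False
    proof (cases "p dvd 3")
      case True
      then have p3: "p = 3" using p(1) by (simp add: primes_dvd_imp_eq)
      obtain a2 where "a1 = 3*a2" using p(2) p3 by blast
      obtain b2 where "b1 = 3*b2" using p(3) p3 by blast
      have "3*s^2 = 3*(3*(a2^2 - b2^2))" using d1 \<open>a1 = 3*a2\<close> \<open>b1 = 3*b2\<close> by algebra
      then have "s^2 = 3*(a2^2 - b2^2)" by linarith
      then have "3 dvd s^2" by (rule dvdI)
      then have "3 dvd s" by (rule three_dvd_sq) 
      have "3*r^2 = 3*(3*(2*a2^2 + b2^2))" using d2 \<open>a1 = 3*a2\<close> \<open>b1 = 3*b2\<close> by algebra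
      then have "r^2 = 3*(2*a2^2 + b2^2)" by linarith
      then have "3 dvd r^2" by (rule dvdI)
      then have "3 dvd r" by (rule three_dvd_sq)
      then show False using \<open>3 dvd s\<close> cp prime_not_unit_dvd[of 3 r s] by simp
    next
      case False
      then have "p dvd s" "p dvd r" using p1 p2 p(1) by (auto simp: prime_dvd_mult_iff dest: prime_dvd_power)
      then show False using p(1) cp prime_not_unit_dvd by blast
    qed
  qed
  have "even (a1 + b1)" "even (a1 - b1)" using oa ob by simp_all
  then obtain A B where hA: "a1 + b1 = 2*A" and hB: "a1 - b1 = 2*B" by (meson evenE)
  have Ap: "A > 0" and Bp: "B > 0" using hA hB ab a1p by linarith+
  have "(2*A)*(2*B) = (2*(2*k^2))*3" unfolding hA[symmetric] hB[symmetric] using d1 sk by algebra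
  then have AB: "A*B = 3*k^2" by simp
  have cAB: "coprime A B"
  proof (rule coprime_by_primes)
    fix p :: int assume p: "prime p" "p dvd A" "p dvd B"
    have "a1 = A + B" "b1 = A - B" using hA hB by linarith+
    then have "p dvd a1" "p dvd b1" using p by simp_all
    then show False using p(1) cab prime_not_unit_dvd by blast
  qed
  have "3 dvd A * B" using AB by simp
  then have "3 dvd A \<or> 3 dvd B" by (simp add: prime_dvd_mult_iff)
  then obtain m n where amn: "a1 = 3*m^2 + n^2" and kmn: "k^2 = m^2*n^2" and cmn: "coprime m n"
    and n3: "\<not> 3 dvd n"
  proof
    assume "3 dvd A"
    then obtain G where G: "A = 3*G" by blast
    have "G * B = k^2" using AB G by simp
    moreover have "coprime G B" using cAB G by simp
    moreover have "G \<ge> 0" using Ap G by simp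
    ultimately obtain m n where m: "G = m^2" and n: "B = n^2" using sqsq Bp by (metis less_imp_le)
    have "a1 = 3*m^2 + n^2" using hA hB G m n by linarith
    moreover have "k^2 = m^2*n^2" using AB G m n by (simp add: mult.commute)
    moreover have "coprime m n" using cAB G m n by simp
    moreover have "\<not> 3 dvd n"
    proof
      assume "3 dvd n" then have "3 dvd B" using n by (simp add: power2_eq_square)
      then show False using cAB G prime_not_unit_dvd[of 3 A B] by simp
    qed
    ultimately show ?thesis using that by blast
  next
    assume "3 dvd B"
    then obtain G where G: "B = 3*G" by blast
    have "G * A = k^2" using AB G by (simp add: mult.commute)
    moreover have "coprime G A" using cAB G by (simp add: coprime_commute)
    moreover have "G \<ge> 0" using Bp G by simp
    ultimately obtain m n where m: "G = m^2" and n: "A = n^2" using sqsq Ap by (metis less_imp_le)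
    have "a1 = 3*m^2 + n^2" using hA hB G m n by linarith
    moreover have "k^2 = m^2*n^2" using AB G m n by (simp add: mult.commute)
    moreover have "coprime m n" using cAB G m n by (simp add: coprime_commute)
    moreover have "\<not> 3 dvd n"
    proof
      assume "3 dvd n" then have "3 dvd A" using n by (simp add: power2_eq_square)
      then show False using cAB G prime_not_unit_dvd[of 3 A B] by simp
    qed
    ultimately show ?thesis using that by blast
  qed
  have m0: "m \<noteq> 0" and n0: "n \<noteq> 0" using kmn k0 by auto
  define P R where "P = m^2 + n^2" and "R = \<bar>r\<bar>"
  have oR: "odd R" unfolding R_def using orr by simp
  have oP: "odd P"
  proof -
    have "P = a1 - 2*m^2" unfolding P_def using amn by simp
    then show ?thesis using oa by simp
  qed
  have RP: "R^2 - P^2 = 8*m^4"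
  proof -
    have "R^2 = a1^2 - s^2" unfolding R_def using ha1 by simp
    also have "... = (3*m^2 + n^2)^2 - 4*(m^2*n^2)" using amn sk kmn by (simp add: power_mult_distrib)
    finally show ?thesis unfolding P_def by algebra
  qed
  have "m^4 > 0" using m0 by simp
  then have "P^2 < R^2" using RP by linarith
  moreover have "P \<ge> 0" "R \<ge> 0" unfolding P_def R_def by simp_all
  ultimately have PR: "P < R" using power_less_imp_less_base by blast
  have "even (R - P)" "even (R + P)" using oR oP by simp_all
  then obtain al be where hal: "R - P = 2*al" and hbe: "R + P = 2*be" by (meson evenE)
  have alp: "al > 0" and bep: "be > 0" using hal hbe PR \<open>P \<ge> 0\<close> by linarith+
  have "(2*al)*(2*be) = 2*(2*(2*m^4))" unfolding hal[symmetric] hbe[symmetric] using RP by algebra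
  then have albe: "al * be = 2*m^4" by simp
  have cal: "coprime al be"
  proof (rule coprime_by_primes)
    fix p :: int assume p: "prime p" "p dvd al" "p dvd be"
    have "R = al + be" "P = be - al" using hal hbe by linarith+
    then have pR: "p dvd R" and pP: "p dvd P" using p by simp_all
    have "p dvd al * be" using p by simp
    then have "p dvd 2*m^4" using albe by simp
    then have "p dvd 2 \<or> p dvd m" using p(1) by (auto simp: prime_dvd_mult_iff dest: prime_dvd_power)
    then show False
    proof
      assume "p dvd 2"
      then have "p = 2" using p(1) by (simp add: primes_dvd_imp_eq)
      then show False using pP oP by simp
    next
      assume pm: "p dvd m"
      then have "p dvd m^2" by (simp add: power2_eq_square)
      then have "p dvd P - m^2" using pP by (intro dvd_diff)
      then have "p dvd n^2" unfolding P_def by simp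
      then have "p dvd n" using p(1) prime_dvd_power by blast
      then show False using pm p(1) cmn prime_not_unit_dvd by blast
    qed
  qed
  have "2 dvd al * be" using albe by simp
  then have "2 dvd al \<or> 2 dvd be" by (simp add: prime_dvd_mult_iff)
  then show ?thesis
  proof
    assume "2 dvd be"
    then obtain G where G: "be = 2*G" by blast
    have "al * G = m^4" using albe G by simp
    moreover have "coprime al G" using cal G by simp
    moreover have "G \<ge> 0" using bep G by simp
    ultimately obtain N M where MN: "al = N^4" "G = M^4" "m^2 = N^2*M^2" and cNM: "coprime N M"
      using fourth[of al G m] alp by auto
    define F1 F2 where "F1 = 2*M^2 + N^2" and "F2 = M^2 - N^2"
    have "P = be - al" using hal hbe by linarith
    then have "n^2 = 2*M^4 - N^4 - N^2*M^2" using MN G unfolding P_def by simp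
    then have FF: "F1 * F2 = n^2" unfolding F1_def F2_def by algebra
    have cF: "coprime F1 F2"
    proof (rule coprime_by_primes)
      fix p :: int assume p: "prime p" "p dvd F1" "p dvd F2"
      have "p dvd F1 + F2" "p dvd F1 - 2*F2" using p by simp_all
      then have "p dvd 3*M^2" "p dvd 3*N^2" unfolding F1_def F2_def by (simp_all add: algebra_simps)
      then have h3: "(p dvd 3 \<or> p dvd M) \<and> (p dvd 3 \<or> p dvd N)" using p(1)
        by (auto simp: prime_dvd_mult_iff dest: prime_dvd_power)
      show False
      proof (cases "p dvd 3")
        case True
        then have "p = 3" using p(1) by (simp add: primes_dvd_imp_eq)
        then have "3 dvd F1 * F2" using p by simp
        then have "3 dvd n^2" using FF by simp
        then have "3 dvd n" by (rule three_dvd_sq)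
        then show False using n3 by simp
      next
        case False
        then show False using h3 p(1) cNM prime_not_unit_dvd by blast
      qed
    qed
    have "N \<noteq> 0" using MN alp by auto
    then have "N^2 > 0" by simp
    moreover have "M^2 \<ge> 0" by simp
    ultimately have F1p: "F1 > 0" unfolding F1_def by linarith
    have "F2 \<ge> 0"
    proof (rule ccontr)
      assume "\<not> F2 \<ge> 0"
      then have "F1 * F2 < 0" using F1p by (simp add: mult_pos_neg)
      then show False using FF by (metis not_less zero_le_power2)
    qed
    then obtain c d where "F1 = c^2" "F2 = d^2" using sqsq[OF cF _ _ FF] F1p by auto
    then have "even M \<and> even N" using caseI_kill unfolding F1_def F2_def by metis
    then show ?thesis using cNM prime_not_unit_dvd[of 2 N M] by auto
  next
    assume "2 dvd al"
    then obtain G where G: "al = 2*G" by blast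
    have "G * be = m^4" using albe G by simp
    moreover have "coprime G be" using cal G by simp
    moreover have "G \<ge> 0" using alp G by simp
    ultimately obtain M N where MN: "G = M^4" "be = N^4" "m^2 = M^2*N^2" and cMN: "coprime M N"
      using fourth[of G be m] bep by auto
    define F1 F2 where "F1 = N^2 - 2*M^2" and "F2 = N^2 + M^2"
    have "P = be - al" using hal hbe by linarith
    then have "n^2 = N^4 - 2*M^4 - M^2*N^2" using MN G unfolding P_def by simp
    then have FF: "F1 * F2 = n^2" unfolding F1_def F2_def by algebra
    have cF: "coprime F1 F2"
    proof (rule coprime_by_primes)
      fix p :: int assume p: "prime p" "p dvd F1" "p dvd F2"
      have "p dvd F2 - F1" "p dvd F1 + 2*F2" using p by simp_all
      then have "p dvd 3*M^2" "p dvd 3*N^2" unfolding F1_def F2_def by (simp_all add: algebra_simps)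
      then have h3: "(p dvd 3 \<or> p dvd M) \<and> (p dvd 3 \<or> p dvd N)" using p(1)
        by (auto simp: prime_dvd_mult_iff dest: prime_dvd_power)
      show False
      proof (cases "p dvd 3")
        case True
        then have "p = 3" using p(1) by (simp add: primes_dvd_imp_eq)
        then have "3 dvd F1 * F2" using p by simp
        then have "3 dvd n^2" using FF by simp
        then have "3 dvd n" by (rule three_dvd_sq)
        then show False using n3 by simp
      next
        case False
        then show False using h3 p(1) cMN prime_not_unit_dvd by blast
      qed
    qed
    have N0: "N \<noteq> 0" using MN bep by auto
    have M0: "M \<noteq> 0" using MN m0 by auto
    have F2p: "F2 > 0" unfolding F2_def using N0 by (simp add: add_pos_nonneg)
    have "F1 \<ge> 0"
    proof (rule ccontr)
      assume "\<not> F1 \<ge> 0"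
      then have "F1 * F2 < 0" using F2p by (simp add: mult_neg_pos)
      then show False using FF by (metis not_less zero_le_power2)
    qed
    then obtain b' a' where b': "F1 = b'^2" and a': "F2 = a'^2" using sqsq[OF cF _ _ FF] F2p by auto
    have "\<bar>M\<bar> < \<bar>s\<bar>"
    proof -
      have "N^2 > 0" using N0 by simp
      then have "N^2 \<ge> 1" by linarith  
      then have "M^2 * 1 \<le> M^2 * N^2" by (intro mult_left_mono) auto
      then have "M^2 \<le> m^2" using MN by simp
      moreover have "n^2 > 0" using n0 by simp
      then have "n^2 \<ge> 1" by linarith
      then have "m^2 * 1 \<le> m^2 * n^2" by (intro mult_left_mono) auto
      then have "m^2 \<le> k^2" using kmn by simp
      moreover have "k^2 < s^2"
      proof -
        have "k^2 > 0" using k0 by simp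
        moreover have "s^2 = 4*k^2" using sk by (simp add: power_mult_distrib)
        ultimately show ?thesis by linarith
      qed
      ultimately have "\<bar>M\<bar>^2 < \<bar>s\<bar>^2" by simp
      then show ?thesis using abs_ge_zero power_less_imp_less_base by blast
    qed
    moreover have "coprime N M" using cMN by (simp add: coprime_commute)
    moreover have "N^2 + M^2 = a'^2" "N^2 - 2*M^2 = b'^2" using a' b' unfolding F1_def F2_def by simp_all
    ultimately show ?thesis using M0 by blast
  qed
qed

theorem caseI:
  fixes r s a b :: int
  assumes "coprime r s" "s \<noteq> 0" "r^2 + s^2 = a^2" "r^2 - 2*s^2 = b^2"
  shows False
proof -
  have "\<forall>r s a b. nat \<bar>s\<bar> = n \<longrightarrow> coprime r s \<longrightarrow> s \<noteq> 0 \<longrightarrow> r^2 + s^2 = a^2 \<longrightarrow> r^2 - 2*s^2 = b^2 \<longrightarrow> False" for n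
  proof (induction n rule: less_induct)
    case (less n)
    show ?case
    proof (intro allI impI)
      fix r s a b :: int
      assume h: "nat \<bar>s\<bar> = n" "coprime r s" "s \<noteq> 0" "r^2 + s^2 = a^2" "r^2 - 2*s^2 = b^2"
      then obtain r' s' a' b' where h': "coprime r' s'" "s' \<noteq> 0" "\<bar>s'\<bar> < \<bar>s\<bar>"
        "r'^2 + s'^2 = a'^2" "r'^2 - 2*s'^2 = b'^2" using caseI_step[of r s a b] by blast
      have "nat \<bar>s'\<bar> < n" using h(1) h'(3) by linarith
      then show False using less.IH h' by blast
    qed
  qed
  then show ?thesis using assms by blast
qed

lemma mod8_uw:
  fixes r s A B :: int
  assumes "r^2 + s^2 = A^2" "2*s^2 - r^2 = B^2"
  shows "even r \<and> even s"
proof -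
  define X Y where "X = r^2" and "Y = s^2"
  have c1: "[X + Y = X mod 8 + Y mod 8] (mod 8)" by (intro cong_add cm8)
  have c2: "[2*Y - X = 2*(Y mod 8) - X mod 8] (mod 8)" by (intro cong_diff cong_mult cong_refl cm8)
  have e1: "A^2 = X + Y" "B^2 = 2*Y - X" using assms unfolding X_def Y_def by simp_all
  have f1: "X mod 8 \<in> {0,1,4}" and f2: "Y mod 8 \<in> {0,1,4}"
    unfolding X_def Y_def by (rule sq8set)+
  have f3: "(X mod 8 + Y mod 8) mod 8 \<in> {0,1,4}"
    using sq8set[of A] c1 unfolding cong_def e1 by (simp only:)
  have f4: "(2*(Y mod 8) - X mod 8) mod 8 \<in> {0,1,4}"
    using sq8set[of B] c2 unfolding cong_def e1 by (simp only:)
  have L: "\<And>x y::int. x \<in> {0,1,4} \<Longrightarrow> y \<in> {0,1,4} \<Longrightarrow> (x + y) mod 8 \<in> {0,1,4} \<Longrightarrow>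
     (2*y - x) mod 8 \<in> {0,1,4} \<Longrightarrow> x \<in> {0,4} \<and> y \<in> {0,4}" by auto
  have "X mod 8 \<in> {0,4} \<and> Y mod 8 \<in> {0,4}" by (rule L[OF f1 f2 f3 f4])
  then have g1: "X mod 8 \<in> {0,4}" and g2: "Y mod 8 \<in> {0,4}" by blast+
  have "even X" "even Y" using even_of_mod8[OF g1] even_of_mod8[OF g2] .
  then show ?thesis unfolding X_def Y_def by simp
qed

lemma mod8_vw:
  fixes r s A B :: int
  assumes "2*r^2 - s^2 = A^2" "r^2 - 2*s^2 = B^2"
  shows "even r \<and> even s"
proof -
  define X Y where "X = r^2" and "Y = s^2"
  have c1: "[2*X - Y = 2*(X mod 8) - Y mod 8] (mod 8)" by (intro cong_diff cong_mult cong_refl cm8)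
  have c2: "[X - 2*Y = X mod 8 - 2*(Y mod 8)] (mod 8)" by (intro cong_diff cong_mult cong_refl cm8)
  have e1: "A^2 = 2*X - Y" "B^2 = X - 2*Y" using assms unfolding X_def Y_def by simp_all
  have f1: "X mod 8 \<in> {0,1,4}" and f2: "Y mod 8 \<in> {0,1,4}"
    unfolding X_def Y_def by (rule sq8set)+
  have f3: "(2*(X mod 8) - Y mod 8) mod 8 \<in> {0,1,4}"
    using sq8set[of A] c1 unfolding cong_def e1 by (simp only:)
  have f4: "(X mod 8 - 2*(Y mod 8)) mod 8 \<in> {0,1,4}"
    using sq8set[of B] c2 unfolding cong_def e1 by (simp only:)
  have L: "\<And>x y::int. x \<in> {0,1,4} \<Longrightarrow> y \<in> {0,1,4} \<Longrightarrow> (2*x - y) mod 8 \<in> {0,1,4} \<Longrightarrow>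
     (x - 2*y) mod 8 \<in> {0,1,4} \<Longrightarrow> x \<in> {0,4} \<and> y \<in> {0,4}" by auto
  have "X mod 8 \<in> {0,4} \<and> Y mod 8 \<in> {0,4}" by (rule L[OF f1 f2 f3 f4])
  then have g1: "X mod 8 \<in> {0,4}" and g2: "Y mod 8 \<in> {0,4}" by blast+
  have "even X" "even Y" using even_of_mod8[OF g1] even_of_mod8[OF g2] .
  then show ?thesis unfolding X_def Y_def by simp
qed

lemma not_both_even:
  fixes r s :: int assumes "coprime r s" "even r" "even s" shows False
  using assms coprime_common_divisor_int[of r s 2] by simp

lemma u_pos:
  fixes r s :: int assumes "coprime r s" shows "r^2 + s^2 > 0"
proof -
  have "r \<noteq> 0 \<or> s \<noteq> 0" using assms by auto
  then show ?thesis by (auto simp: add_pos_nonneg add_nonneg_pos)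
qed

lemma not3u:
  fixes r s :: int assumes "coprime r s" shows "\<not> 3 dvd r^2 + s^2"
proof
  assume "3 dvd r^2 + s^2"
  then have "3 dvd r" "3 dvd s" using sumsq3 by blast+
  then show False using assms prime_not_unit_dvd[of 3 r s] by simp
qed

lemma v_ne0:
  fixes r s :: int assumes "coprime r s" shows "2*r^2 - s^2 \<noteq> 0"
proof
  assume h: "2*r^2 - s^2 = 0"
  then have "even (s^2)" by (metis dvd_triv_left eq_iff_diff_eq_0)
  then have "even s" by simp
  then obtain t where "s = 2*t" by blast
  then have "r^2 = 2*t^2" using h by (simp add: power_mult_distrib)
  then have "even (r^2)" by simp
  then have "even r" by simp
  then show False using not_both_even[OF assms] \<open>even s\<close> by simp
qed

lemma w_ne0:
  fixes r s :: int assumes "coprime r s" shows "2*s^2 - r^2 \<noteq> 0"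
  using v_ne0[of s r] assms by (simp add: coprime_commute)

definition Fset :: "(int \<times> int) set" where
  "Fset = {(1,0),(-1,0),(1,1),(1,-1),(-1,1),(-1,-1)}"

lemma unit_sign: "(e::int) \<in> {1,-1} \<Longrightarrow> e*D = j^2 \<Longrightarrow> (e = 1 \<and> D = j^2) \<or> (e = -1 \<and> -D = j^2)"
  by auto

lemma K3u:
  fixes r s e j :: int
  assumes cp: "coprime r s" and e: "e \<in> {1,-1}" and h: "e*(3*(r^2+s^2)) = j^2"
  shows False
proof -
  have up: "r^2 + s^2 > 0" using u_pos[OF cp] .
  from unit_sign[OF e h] show False
  proof
    assume "e = 1 \<and> 3*(r^2+s^2) = j^2"
    then have hj: "3*(r^2+s^2) = j^2" by simp
    then have "3 dvd j^2" by (metis dvd_triv_left)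
    then have "3 dvd j" by (rule three_dvd_sq)
    then obtain i where "j = 3*i" by blast
    then have "r^2 + s^2 = 3*i^2" using hj by (simp add: power_mult_distrib)
    then have "3 dvd r^2 + s^2" by simp
    then show False using not3u[OF cp] by simp
  next
    assume "e = -1 \<and> -(3*(r^2+s^2)) = j^2"
    then have "-(3*(r^2+s^2)) \<ge> 0" by simp
    then show False using up by simp
  qed
qed

lemma K3v:
  fixes r s e j :: int
  assumes cp: "coprime r s" and e: "e \<in> {1,-1}" and h: "e*(3*(2*r^2-s^2)) = j^2"
  shows False
proof -
  have "3 dvd j^2" using h by (metis dvd_triv_left mult.left_commute)
  then have "3 dvd j" by (rule three_dvd_sq)
  then obtain i where "j = 3*i" by blast
  then have "3*(e*(2*r^2-s^2)) = 3*(3*i^2)" using h by algebra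
  then have "e*(2*r^2-s^2) = 3*i^2" by simp
  then have "3 dvd e*(2*r^2-s^2)" by simp
  then have "3 dvd 2*r^2-s^2" using e by (auto simp: dvd_diff_commute)
  moreover have t3: "3 dvd 3*r^2" by simp
  ultimately have "3 dvd 3*r^2 - (2*r^2-s^2)" using dvd_diff by blast
  moreover have "3*r^2 - (2*r^2-s^2) = r^2 + s^2" by simp
  ultimately have "3 dvd r^2 + s^2" by (simp only:)
  then show False using not3u[OF cp] by simp
qed

lemma cop_uw:
  fixes r s :: int assumes cp: "coprime r s" shows "coprime (r^2+s^2) (2*s^2-r^2)"
proof (rule coprime_by_primes)
  fix p :: int assume p: "prime p" "p dvd r^2+s^2" "p dvd 2*s^2-r^2"
  have d1: "p dvd (r^2+s^2) + (2*s^2-r^2)" using p(2,3) by (rule dvd_add)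
  have "p dvd 2*(r^2+s^2)" using p(2) by (rule dvd_mult)
  then have d2: "p dvd 2*(r^2+s^2) - (2*s^2-r^2)" using p(3) by (rule dvd_diff)
  have q1: "(r^2+s^2) + (2*s^2-r^2) = 3*s^2" and q2: "2*(r^2+s^2) - (2*s^2-r^2) = 3*r^2" by simp_all
  have "p dvd 3*s^2" "p dvd 3*r^2" using d1 d2 unfolding q1 q2 .
  then have h3: "(p dvd 3 \<or> p dvd s) \<and> (p dvd 3 \<or> p dvd r)" using p(1)
    by (auto simp: prime_dvd_mult_iff dest: prime_dvd_power)
  show False
  proof (cases "p dvd 3")
    case True
    then have "p = 3" using p(1) by (simp add: primes_dvd_imp_eq)
    then show False using p(2) not3u[OF cp] by simp
  next
    case False
    then show False using h3 p(1) cp prime_not_unit_dvd by blast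
  qed
qed

lemma cop_vw:
  fixes r s :: int assumes cp: "coprime r s" shows "coprime (2*r^2-s^2) (2*s^2-r^2)"
proof (rule coprime_by_primes)
  fix p :: int assume p: "prime p" "p dvd 2*r^2-s^2" "p dvd 2*s^2-r^2"
  have "p dvd 2*(2*s^2-r^2)" using p(3) by (rule dvd_mult)
  with p(2) have d1: "p dvd (2*r^2-s^2) + 2*(2*s^2-r^2)" by (rule dvd_add)
  have "p dvd 2*(2*r^2-s^2)" using p(2) by (rule dvd_mult)
  then have d2: "p dvd 2*(2*r^2-s^2) + (2*s^2-r^2)" using p(3) by (rule dvd_add)
  have q1: "(2*r^2-s^2) + 2*(2*s^2-r^2) = 3*s^2" and q2: "2*(2*r^2-s^2) + (2*s^2-r^2) = 3*r^2" by simp_all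
  have "p dvd 3*s^2" "p dvd 3*r^2" using d1 d2 unfolding q1 q2 .
  then have h3: "(p dvd 3 \<or> p dvd s) \<and> (p dvd 3 \<or> p dvd r)" using p(1)
    by (auto simp: prime_dvd_mult_iff dest: prime_dvd_power)
  show False
  proof (cases "p dvd 3")
    case True
    then have "p = 3" using p(1) by (simp add: primes_dvd_imp_eq)
    then have "3 dvd (2*r^2-s^2) + (2*s^2-r^2)" using p by (intro dvd_add) simp_all
    moreover have "(2*r^2-s^2) + (2*s^2-r^2) = r^2 + s^2" by simp
    ultimately have "3 dvd r^2 + s^2" by (simp only:)
    then show False using not3u[OF cp] by simp
  next
    case False
    then show False using h3 p(1) cp prime_not_unit_dvd by blast
  qed
qed

lemma Kuw:
  fixes r s e j :: int
  assumes cp: "coprime r s" and e: "e \<in> {1,-1}" and h: "e*((r^2+s^2)*(2*s^2-r^2)) = j^2"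
  shows "(r,s) \<in> Fset"
proof -
  have up: "r^2 + s^2 > 0" using u_pos[OF cp] .
  have c: "coprime (r^2+s^2) (2*s^2-r^2)" using cop_uw[OF cp] .
  from unit_sign[OF e h] show ?thesis
  proof
    assume "e = 1 \<and> (r^2+s^2)*(2*s^2-r^2) = j^2"
    then have hj: "(r^2+s^2)*(2*s^2-r^2) = j^2" by simp
    have "2*s^2-r^2 \<ge> 0"
    proof (rule ccontr)
      assume "\<not> 2*s^2-r^2 \<ge> 0"
      then have "(r^2+s^2)*(2*s^2-r^2) < 0" using up by (simp add: mult_pos_neg)
      then show False using hj by (metis not_less zero_le_power2)
    qed
    then obtain A B where "r^2+s^2 = A^2" "2*s^2-r^2 = B^2" using sqsq[OF c _ _ hj] up by auto
    then have "even r \<and> even s" by (rule mod8_uw)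
    then show ?thesis using not_both_even[OF cp] by blast
  next
    assume "e = -1 \<and> -((r^2+s^2)*(2*s^2-r^2)) = j^2"
    then have hj: "(r^2+s^2)*(r^2-2*s^2) = j^2" by (simp add: algebra_simps)
    have c': "coprime (r^2+s^2) (r^2-2*s^2)" using c
      by (metis coprime_minus_right_iff minus_diff_eq)
    have "r^2-2*s^2 \<ge> 0"
    proof (rule ccontr)
      assume "\<not> r^2-2*s^2 \<ge> 0"
      then have "(r^2+s^2)*(r^2-2*s^2) < 0" using up by (simp add: mult_pos_neg)
      then show False using hj by (metis not_less zero_le_power2)
    qed
    then obtain A B where AB: "r^2+s^2 = A^2" "r^2-2*s^2 = B^2" using sqsq[OF c' _ _ hj] up by auto
    show ?thesis
    proof (cases "s = 0")
      case True
      then have "is_unit r" using cp by simp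
      then have "r = 1 \<or> r = -1" by auto
      then show ?thesis using True unfolding Fset_def by auto
    next
      case False
      then show ?thesis using caseI[OF cp False AB] by simp
    qed
  qed
qed

lemma Kvw:
  fixes r s e j :: int
  assumes cp: "coprime r s" and e: "e \<in> {1,-1}" and h: "e*((2*r^2-s^2)*(2*s^2-r^2)) = j^2"
  shows "(r,s) \<in> Fset"
proof -
  have up: "r^2 + s^2 > 0" using u_pos[OF cp] .
  have c: "coprime (2*r^2-s^2) (2*s^2-r^2)" using cop_vw[OF cp] .
  have v0: "2*r^2-s^2 \<noteq> 0" using v_ne0[OF cp] .
  from unit_sign[OF e h] show ?thesis
  proof
    assume "e = 1 \<and> (2*r^2-s^2)*(2*s^2-r^2) = j^2"
    then have hj: "(2*r^2-s^2)*(2*s^2-r^2) = j^2" by simp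
    have vp: "2*r^2-s^2 > 0"
    proof (rule ccontr)
      assume "\<not> 2*r^2-s^2 > 0"
      then have "2*r^2-s^2 < 0" using v0 by simp
      moreover have "2*s^2-r^2 > 0" using calculation up by linarith
      ultimately have "(2*r^2-s^2)*(2*s^2-r^2) < 0" by (simp add: mult_neg_pos)
      then show False using hj by (metis not_less zero_le_power2)
    qed
    have "2*s^2-r^2 \<ge> 0"
    proof (rule ccontr)
      assume "\<not> 2*s^2-r^2 \<ge> 0"
      then have "(2*r^2-s^2)*(2*s^2-r^2) < 0" using vp by (simp add: mult_pos_neg)
      then show False using hj by (metis not_less zero_le_power2)
    qed
    then obtain A B where "2*r^2-s^2 = A^2" "2*s^2-r^2 = B^2" using sqsq[OF c _ _ hj] vp by auto
    then have "r^2 = s^2" by (rule caseII)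
    then have "r = s \<or> r = -s" by (simp add: power2_eq_iff)
    then have "coprime r r" using cp by auto
    then have "is_unit r" by simp
    then have "r = 1 \<or> r = -1" by auto
    then show ?thesis using \<open>r = s \<or> r = -s\<close> unfolding Fset_def by auto
  next
    assume "e = -1 \<and> -((2*r^2-s^2)*(2*s^2-r^2)) = j^2"
    then have hj: "(2*r^2-s^2)*(r^2-2*s^2) = j^2" by (simp add: algebra_simps)
    have c': "coprime (2*r^2-s^2) (r^2-2*s^2)" using c
      by (metis coprime_minus_right_iff minus_diff_eq)
    show ?thesis
    proof (cases "2*r^2-s^2 > 0")
      case True
      have "r^2-2*s^2 \<ge> 0"
      proof (rule ccontr)
        assume "\<not> r^2-2*s^2 \<ge> 0"
        then have "(2*r^2-s^2)*(r^2-2*s^2) < 0" using True by (simp add: mult_pos_neg)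
        then show False using hj by (metis not_less zero_le_power2)
      qed
      then obtain A B where "2*r^2-s^2 = A^2" "r^2-2*s^2 = B^2" using sqsq[OF c' _ _ hj] True by auto
      then have "even r \<and> even s" by (rule mod8_vw)
      then show ?thesis using not_both_even[OF cp] by blast
    next
      case False
      then have vn: "s^2 - 2*r^2 > 0" using v0 by simp
      have hj2: "(s^2-2*r^2)*(2*s^2-r^2) = j^2" using hj by (simp add: algebra_simps)
      have c2: "coprime (s^2-2*r^2) (2*s^2-r^2)" using c
        by (metis coprime_minus_left_iff minus_diff_eq)
      have "2*s^2-r^2 \<ge> 0"
      proof (rule ccontr)
        assume "\<not> 2*s^2-r^2 \<ge> 0"
        then have "(s^2-2*r^2)*(2*s^2-r^2) < 0" using vn by (simp add: mult_pos_neg)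
        then show False using hj2 by (metis not_less zero_le_power2)
      qed
      then obtain A B where "2*s^2-r^2 = A^2" "s^2-2*r^2 = B^2" using sqsq[OF c2 _ _ hj2] vn by auto
      then have "even s \<and> even r" by (rule mod8_vw)
      then show ?thesis using not_both_even[OF cp] by blast
    qed
  qed
qed

lemma fin_help:
  fixes c e D k :: int
  assumes "c \<noteq> 0" "e*(c^2*D) = k^2"
  shows "\<exists>j. e*D = j^2"
  using sq_cancel[of c "e*D" k] assms by (simp add: algebra_simps)

lemma core:
  fixes r s e X0 Y0 k :: int
  assumes cp: "coprime r s" and r0: "r \<noteq> 0" and e: "e \<in> {1,-1}"
    and X0: "X0 \<in> {(r^2+s^2)*(3*r^2), (r^2+s^2)*(2*s^2-r^2), (2*r^2-s^2)*(3*r^2), (2*r^2-s^2)*(2*s^2-r^2)}"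
    and Y0: "Y0 \<in> {1, 3*r^2*(r^2+s^2)*(2*r^2-s^2)*(2*s^2-r^2)}"
    and h: "e*(X0*Y0) = k^2"
  shows "(r,s) \<in> Fset"
proof -
  define u v w where "u = r^2+s^2" and "v = 2*r^2-s^2" and "w = 2*s^2-r^2"
  have "u > 0" using u_pos[OF cp] unfolding u_def .
  then have u0: "u \<noteq> 0" by simp
  have v0: "v \<noteq> 0" using v_ne0[OF cp] unfolding v_def .
  have w0: "w \<noteq> 0" using w_ne0[OF cp] unfolding w_def .
  have KU: "\<And>j. e*(3*u) = j^2 \<Longrightarrow> (r,s) \<in> Fset" using K3u[OF cp e] unfolding u_def by blast
  have KV: "\<And>j. e*(3*v) = j^2 \<Longrightarrow> (r,s) \<in> Fset" using K3v[OF cp e] unfolding v_def by blast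
  have KUW: "\<And>j. e*(u*w) = j^2 \<Longrightarrow> (r,s) \<in> Fset" using Kuw[OF cp e] unfolding u_def w_def by blast
  have KVW: "\<And>j. e*(v*w) = j^2 \<Longrightarrow> (r,s) \<in> Fset" using Kvw[OF cp e] unfolding v_def w_def by blast
  have X0': "X0 \<in> {u*(3*r^2), u*w, v*(3*r^2), v*w}" using X0 unfolding u_def v_def w_def .
  have Y0': "Y0 \<in> {1, 3*r^2*u*v*w}" using Y0 unfolding u_def v_def w_def .
  have G: "\<And>c D. c \<noteq> 0 \<Longrightarrow> X0*Y0 = c^2*D \<Longrightarrow> (\<And>j. e*D = j^2 \<Longrightarrow> (r,s) \<in> Fset) \<Longrightarrow> (r,s) \<in> Fset"
  proof -
    fix c D assume c0: "c \<noteq> 0" and XY: "X0*Y0 = c^2*D" and K: "\<And>j. e*D = j^2 \<Longrightarrow> (r,s) \<in> Fset"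
    have "e*(c^2*D) = k^2" using h XY by simp
    then obtain j where "e*D = j^2" using fin_help[OF c0] by blast
    then show "(r,s) \<in> Fset" by (rule K)
  qed
  from Y0' show ?thesis
  proof (elim insertE emptyE)
    assume y1: "Y0 = 1"
    from X0' show ?thesis
    proof (elim insertE emptyE)
      assume "X0 = u*(3*r^2)"
      then show ?thesis using G[of r "3*u"] KU r0 y1 by (simp add: algebra_simps power2_eq_square)
    next
      assume "X0 = u*w"
      then show ?thesis using G[of 1 "u*w"] KUW y1 by simp
    next
      assume "X0 = v*(3*r^2)"
      then show ?thesis using G[of r "3*v"] KV r0 y1 by (simp add: algebra_simps power2_eq_square)
    next
      assume "X0 = v*w"
      then show ?thesis using G[of 1 "v*w"] KVW y1 by simp
    qed
  next
    assume yA: "Y0 = 3*r^2*u*v*w"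
    from X0' show ?thesis
    proof (elim insertE emptyE)
      assume "X0 = u*(3*r^2)"
      then have "X0*Y0 = (3*r^2*u)^2*(v*w)" using yA by algebra
      moreover have "3*r^2*u \<noteq> 0" using r0 u0 by simp
      ultimately show ?thesis using G KVW by blast
    next
      assume "X0 = u*w"
      then have "X0*Y0 = (u*w*r)^2*(3*v)" using yA by algebra
      moreover have "u*w*r \<noteq> 0" using r0 u0 w0 by simp
      ultimately show ?thesis using G KV by blast
    next
      assume "X0 = v*(3*r^2)"
      then have "X0*Y0 = (3*r^2*v)^2*(u*w)" using yA by algebra
      moreover have "3*r^2*v \<noteq> 0" using r0 v0 by simp
      ultimately show ?thesis using G KUW by blast
    next
      assume "X0 = v*w"
      then have "X0*Y0 = (v*w*r)^2*(3*u)" using yA by algebra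
      moreover have "v*w*r \<noteq> 0" using r0 v0 w0 by simp
      ultimately show ?thesis using G KU by blast
    qed
  qed
qed

lemma sq_class_prod:
  fixes x y :: int
  assumes "same_sq_class (of_int x) (of_int y)"
  shows "\<exists>k. x*y = k^2"
proof -
  from assms obtain q :: rat where x0: "x \<noteq> 0" and y0: "y \<noteq> 0" and q: "of_int x / of_int y = q^2"
    unfolding same_sq_class_def by auto
  have "(of_int x :: rat) = q^2 * of_int y" using q y0 by (simp add: divide_eq_eq)
  then have "(of_int (x*y) :: rat) = (q * of_int y)^2" by (simp add: power_mult_distrib power2_eq_square)
  then show ?thesis by (rule rat_sq)
qed

theorem lemma6p3:
  shows "finite {(r :: int, s :: int). coprime r s \<and> r \<noteq> 0 \<and>
            (\<exists>x \<in> S_of r s. \<exists>y \<in> {1, -1, A_of r s, - A_of r s}.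
               same_sq_class (of_int x) (of_int y))}"
proof (rule finite_subset)
  show "finite Fset" unfolding Fset_def by simp
  show "{(r :: int, s :: int). coprime r s \<and> r \<noteq> 0 \<and>
            (\<exists>x \<in> S_of r s. \<exists>y \<in> {1, -1, A_of r s, - A_of r s}.
               same_sq_class (of_int x) (of_int y))} \<subseteq> Fset"
  proof
    fix p assume "p \<in> {(r :: int, s :: int). coprime r s \<and> r \<noteq> 0 \<and>
            (\<exists>x \<in> S_of r s. \<exists>y \<in> {1, -1, A_of r s, - A_of r s}.
               same_sq_class (of_int x) (of_int y))}"
    then obtain r s x y where pe: "p = (r,s)" and cp: "coprime r s" and r0: "r \<noteq> 0" and xS: "x \<in> S_of r s"
      and yS: "y \<in> {1, -1, A_of r s, - A_of r s}" and sc: "same_sq_class (of_int x) (of_int y)"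
      by blast
    obtain k where k: "x*y = k^2" using sq_class_prod[OF sc] by blast
    define u v where "u = u_of r s" and "v = v_of r s"
    have uv: "u + v = 3*r^2" "u - v = 2*s^2-r^2" "u = r^2+s^2" "v = 2*r^2-s^2"
      unfolding u_def v_def u_of_def v_of_def by simp_all
    have A: "A_of r s = 3*r^2*(r^2+s^2)*(2*r^2-s^2)*(2*s^2-r^2)"
      unfolding A_of_def u_of_def v_of_def by algebra
    have xS': "x \<in> {u*(u+v), -(u*(u+v)), u*(u-v), -(u*(u-v)), v*(u+v), -(v*(u+v)), v*(u-v), -(v*(u-v))}"
      using xS unfolding S_of_def u_def v_def Let_def .
    obtain ex X0 where ex: "ex \<in> {1,-1}" and X0: "X0 \<in> {(r^2+s^2)*(3*r^2), (r^2+s^2)*(2*s^2-r^2), (2*r^2-s^2)*(3*r^2), (2*r^2-s^2)*(2*s^2-r^2)}"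
      and xe: "x = ex*X0"
    proof -
      from xS' show ?thesis
        unfolding uv(1,2) unfolding uv(3,4)
        apply (elim insertE emptyE)
      apply (rule that[of "1" "(r^2+s^2)*(3*r^2)"]; simp)
      apply (rule that[of "-1" "(r^2+s^2)*(3*r^2)"]; simp)
      apply (rule that[of "1" "(r^2+s^2)*(2*s^2-r^2)"]; simp)
      apply (rule that[of "-1" "(r^2+s^2)*(2*s^2-r^2)"]; simp)
      apply (rule that[of "1" "(2*r^2-s^2)*(3*r^2)"]; simp)
      apply (rule that[of "-1" "(2*r^2-s^2)*(3*r^2)"]; simp)
      apply (rule that[of "1" "(2*r^2-s^2)*(2*s^2-r^2)"]; simp)
      apply (rule that[of "-1" "(2*r^2-s^2)*(2*s^2-r^2)"]; simp)
        done
    qed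
    obtain ey Y0 where ey: "ey \<in> {1,-1}" and Y0: "Y0 \<in> {1, 3*r^2*(r^2+s^2)*(2*r^2-s^2)*(2*s^2-r^2)}"
      and ye: "y = ey*Y0"
    proof -
      from yS show ?thesis unfolding A
        apply (elim insertE emptyE)
      apply (rule that[of "1" "1"]; simp)
      apply (rule that[of "-1" "1"]; simp)
      apply (rule that[of "1" "3*r^2*(r^2+s^2)*(2*r^2-s^2)*(2*s^2-r^2)"]; simp)
      apply (rule that[of "-1" "3*r^2*(r^2+s^2)*(2*r^2-s^2)*(2*s^2-r^2)"]; simp)
        done
    qed
    have e: "ex*ey \<in> {1,-1}" using ex ey by auto
    have "(ex*ey)*(X0*Y0) = k^2" using k xe ye by (simp add: algebra_simps)
    then show "p \<in> Fset" using core[OF cp r0 e X0 Y0] pe by blast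
  qed
qed

end
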